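(* Assume that all entries of $b\in\mathbb{R}^m$ are nonzero. Then for a generic $\mathcal{A}$, i.e. for all $(A_1,\dots,A_m)\in(\mathbb{S}^n)^m$ outside a Lebesgue measure zero set, every feasible point $Y\in\mathbb{R}^{n\times p}$ of (BM) satisfies the linear independence constraint qualification: the gradients $\{2A_iY : i\in I(Y)\}$ of the active constraints are linearly independent in $\mathbb{R}^{n\times p}$.
   Context: Let $\mathbb{S}^n$ be the space of real symmetric $n\times n$ matrices and $\mathbb{S}^n_+$ the cone of positive semidefinite ones, with $A\bullet B=\operatorname{trace}(A^TB)$. Let $m=m_1+m_2$, $A_1,\dots,A_m\in\mathbb{S}^n$, $b\in\mathbb{R}^m$, $\mathscr{X}=\{X\in\mathbb{S}^n_+ : A_i\bullet X=b_i \ (i\le m_1),\ A_i\bullet X\ge b_i\ (m_1<i\le m)\}$. A point $Y\in\mathbb{R}^{n\times p}$ is feasible for (BM) if $YY^T\in\mathscr{X}$; its active set is $I(Y)=\{i: A_i\bullet YY^T=b_i\}$. The $i$-th constraint function is $h_i(Y)=A_i\bullet YY^T-b_i$, with gradient $2A_iY$. *)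

theory Defs
  imports "HOL-Analysis.Analysis"
begin

text \<open>Matrices are represented as functions nat \<Rightarrow> nat \<Rightarrow> real, with explicit
  dimension bounds; entries outside the bounds are ignored by every notion below.
  Constraints are indexed 0-based: i < m1 equality, m1 \<le> i < m1 + m2 inequality.\<close>

text \<open>Coordinates of (S^n)^m: the upper-triangular entries (k,i,j), i \<le> j, of each A_k.\<close>
definition coord_index :: "nat \<Rightarrow> nat \<Rightarrow> (nat \<times> nat \<times> nat) set" where
  "coord_index n m = {(k, i, j). k < m \<and> i \<le> j \<and> j < n}"

definition sym_lebesgue :: "nat \<Rightarrow> nat \<Rightarrow> ((nat \<times> nat \<times> nat) \<Rightarrow> real) measure" where
  "sym_lebesgue n m = PiM (coord_index n m) (\<lambda>_. lborel)"

definition sym_mats_of :: "((nat \<times> nat \<times> nat) \<Rightarrow> real) \<Rightarrow> nat \<Rightarrow> nat \<Rightarrow> nat \<Rightarrow> real" where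
  "sym_mats_of c k i j = c (k, min i j, max i j)"

definition frob_inner :: "nat \<Rightarrow> (nat \<Rightarrow> nat \<Rightarrow> real) \<Rightarrow> (nat \<Rightarrow> nat \<Rightarrow> real) \<Rightarrow> real" where
  "frob_inner n A X = (\<Sum>i<n. \<Sum>j<n. A i j * X i j)"

definition gram :: "nat \<Rightarrow> (nat \<Rightarrow> nat \<Rightarrow> real) \<Rightarrow> nat \<Rightarrow> nat \<Rightarrow> real" where
  "gram p Y i j = (\<Sum>l<p. Y i l * Y j l)"

definition is_sym :: "nat \<Rightarrow> (nat \<Rightarrow> nat \<Rightarrow> real) \<Rightarrow> bool" where
  "is_sym n X \<longleftrightarrow> (\<forall>i<n. \<forall>j<n. X i j = X j i)"

definition psd :: "nat \<Rightarrow> (nat \<Rightarrow> nat \<Rightarrow> real) \<Rightarrow> bool" where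
  "psd n X \<longleftrightarrow> is_sym n X \<and> (\<forall>v :: nat \<Rightarrow> real. 0 \<le> (\<Sum>i<n. \<Sum>j<n. v i * X i j * v j))"

definition feasible_set ::
  "nat \<Rightarrow> nat \<Rightarrow> nat \<Rightarrow> (nat \<Rightarrow> nat \<Rightarrow> nat \<Rightarrow> real) \<Rightarrow> (nat \<Rightarrow> real) \<Rightarrow> (nat \<Rightarrow> nat \<Rightarrow> real) set" where
  "feasible_set n m1 m2 A b =
     {X. psd n X \<and> (\<forall>i<m1. frob_inner n (A i) X = b i)
         \<and> (\<forall>i. m1 \<le> i \<and> i < m1 + m2 \<longrightarrow> frob_inner n (A i) X \<ge> b i)}"

definition BM_feasible ::
  "nat \<Rightarrow> nat \<Rightarrow> nat \<Rightarrow> nat \<Rightarrow> (nat \<Rightarrow> nat \<Rightarrow> nat \<Rightarrow> real) \<Rightarrow> (nat \<Rightarrow> real) \<Rightarrow> (nat \<Rightarrow> nat \<Rightarrow> real) \<Rightarrow> bool" where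
  "BM_feasible n p m1 m2 A b Y \<longleftrightarrow> gram p Y \<in> feasible_set n m1 m2 A b"

definition active_set ::
  "nat \<Rightarrow> nat \<Rightarrow> nat \<Rightarrow> (nat \<Rightarrow> nat \<Rightarrow> nat \<Rightarrow> real) \<Rightarrow> (nat \<Rightarrow> real) \<Rightarrow> (nat \<Rightarrow> nat \<Rightarrow> real) \<Rightarrow> nat set" where
  "active_set n p m A b Y = {i. i < m \<and> frob_inner n (A i) (gram p Y) = b i}"

definition constr_grad ::
  "nat \<Rightarrow> (nat \<Rightarrow> nat \<Rightarrow> nat \<Rightarrow> real) \<Rightarrow> nat \<Rightarrow> (nat \<Rightarrow> nat \<Rightarrow> real) \<Rightarrow> nat \<Rightarrow> nat \<Rightarrow> real" where
  "constr_grad n A i Y j l = 2 * (\<Sum>k<n. A i j k * Y k l)"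

definition LICQ ::
  "nat \<Rightarrow> nat \<Rightarrow> nat \<Rightarrow> (nat \<Rightarrow> nat \<Rightarrow> nat \<Rightarrow> real) \<Rightarrow> (nat \<Rightarrow> real) \<Rightarrow> (nat \<Rightarrow> nat \<Rightarrow> real) \<Rightarrow> bool" where
  "LICQ n p m A b Y \<longleftrightarrow>
     (\<forall>\<mu> :: nat \<Rightarrow> real.
        (\<forall>j<n. \<forall>l<p. (\<Sum>i\<in>active_set n p m A b Y. \<mu> i * constr_grad n A i Y j l) = 0)
        \<longrightarrow> (\<forall>i\<in>active_set n p m A b Y. \<mu> i = 0))"

end

theory Submission
  imports Defs
begin

lemma lin_dep:
  fixes L :: "'u \<Rightarrow> 'v \<Rightarrow> real"
  assumes "finite V" "finite U" "card V < card U"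
  shows "\<exists>c. (\<exists>u\<in>U. c u \<noteq> 0) \<and> (\<forall>v\<in>V. (\<Sum>u\<in>U. c u * L u v) = 0)"
  using assms
proof (induction V arbitrary: U L rule: finite_induct)
  case empty
  then obtain u where "u \<in> U" by (metis card.empty equals0I less_irrefl)
  then show ?case by (intro exI[of _ "\<lambda>_. 1"]) auto
next
  case (insert v V)
  show ?case
  proof (cases "\<forall>u\<in>U. L u v = 0")
    case True
    have "card V < card U" using insert by simp
    then obtain c where c: "\<exists>u\<in>U. c u \<noteq> 0" "\<forall>w\<in>V. (\<Sum>u\<in>U. c u * L u w) = 0"
      using insert.IH[of U L] insert.prems by blast
    show ?thesis using c True by (intro exI[of _ c]) auto
  next
    case False
    then obtain u0 where u0: "u0 \<in> U" "L u0 v \<noteq> 0" by blast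
    define U' where "U' = U - {u0}"
    define L' where "L' u w = L u w - L u v / L u0 v * L u0 w" for u w
    have fU': "finite U'" using insert.prems U'_def by simp
    have "card U' = card U - 1" using u0 insert.prems U'_def by simp
    moreover have "card (insert v V) = card V + 1" using insert by simp
    ultimately have "card V < card U'" using insert.prems by linarith
    then obtain c' where c': "\<exists>u\<in>U'. c' u \<noteq> 0" "\<forall>w\<in>V. (\<Sum>u\<in>U'. c' u * L' u w) = 0"
      using insert.IH[of U' L'] fU' by blast
    define c where "c u = (if u = u0 then - (\<Sum>u\<in>U'. c' u * L u v) / L u0 v else c' u)" for u
    have split: "(\<Sum>u\<in>U. c u * L u w) = c u0 * L u0 w + (\<Sum>u\<in>U'. c' u * L u w)" for w
    proof -
      have "(\<Sum>u\<in>U. c u * L u w) = c u0 * L u0 w + (\<Sum>u\<in>U'. c u * L u w)"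
        unfolding U'_def using u0 insert.prems by (simp add: sum.remove)
      also have "(\<Sum>u\<in>U'. c u * L u w) = (\<Sum>u\<in>U'. c' u * L u w)"
        by (rule sum.cong) (auto simp: c_def U'_def)
      finally show ?thesis .
    qed
    have "\<forall>w\<in>insert v V. (\<Sum>u\<in>U. c u * L u w) = 0"
    proof
      fix w assume w: "w \<in> insert v V"
      show "(\<Sum>u\<in>U. c u * L u w) = 0"
      proof (cases "w = v")
        case True
        then show ?thesis unfolding split using u0 by (simp add: c_def)
      next
        case False
        then have wV: "w \<in> V" using w by simp
        have "(\<Sum>u\<in>U'. c' u * L' u w) = (\<Sum>u\<in>U'. c' u * L u w) - (\<Sum>u\<in>U'. c' u * L u v) / L u0 v * L u0 w"
          unfolding L'_def by (simp add: algebra_simps sum_subtractf sum_distrib_left sum_distrib_right sum_divide_distrib)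
        then show ?thesis unfolding split using c'(2) wV u0 by (simp add: c_def algebra_simps)
      qed
    qed
    moreover have "\<exists>u\<in>U. c u \<noteq> 0" using c'(1) unfolding U'_def c_def by auto
    ultimately show ?thesis by blast
  qed
qed

definition mnm :: "'k set \<Rightarrow> ('k \<Rightarrow> nat) \<Rightarrow> ('k \<Rightarrow> real) \<Rightarrow> real" where
  "mnm K \<alpha> x = (\<Prod>k\<in>K. x k ^ \<alpha> k)"
definition boxe :: "'k set \<Rightarrow> nat \<Rightarrow> ('k \<Rightarrow> nat) set" where
  "boxe K e = PiE K (\<lambda>_. {..e})"
definition mpoly_le :: "'k set \<Rightarrow> nat \<Rightarrow> (('k \<Rightarrow> real) \<Rightarrow> real) \<Rightarrow> bool" where
  "mpoly_le K e f \<longleftrightarrow> (\<exists>c. \<forall>x. f x = (\<Sum>\<alpha>\<in>boxe K e. c \<alpha> * mnm K \<alpha> x))"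
definition mpoly :: "'k set \<Rightarrow> (('k \<Rightarrow> real) \<Rightarrow> real) \<Rightarrow> bool" where
  "mpoly K f \<longleftrightarrow> (\<exists>e. mpoly_le K e f)"

lemma finite_boxe[simp]: "finite K \<Longrightarrow> finite (boxe K e)"
  unfolding boxe_def by (simp add: finite_PiE)

lemma card_boxe: "finite K \<Longrightarrow> card (boxe K e) = (e+1) ^ card K"
  unfolding boxe_def by (simp add: card_PiE)

lemma boxe_mono: "e \<le> e' \<Longrightarrow> boxe K e \<subseteq> boxe K e'"
  unfolding boxe_def by (auto simp: PiE_iff intro: order_trans)

lemma mpoly_le_mono:
  assumes "finite K" "e \<le> e'" "mpoly_le K e f" shows "mpoly_le K e' f"
proof -
  obtain c where c: "\<forall>x. f x = (\<Sum>\<alpha>\<in>boxe K e. c \<alpha> * mnm K \<alpha> x)"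
    using assms(3) unfolding mpoly_le_def by blast
  define c' where "c' \<alpha> = (if \<alpha> \<in> boxe K e then c \<alpha> else 0)" for \<alpha>
  have "(\<Sum>\<alpha>\<in>boxe K e'. c' \<alpha> * mnm K \<alpha> x) = (\<Sum>\<alpha>\<in>boxe K e. c' \<alpha> * mnm K \<alpha> x)" for x
    by (rule sum.mono_neutral_right) (auto simp: assms boxe_mono c'_def)
  also have "\<dots> x = (\<Sum>\<alpha>\<in>boxe K e. c \<alpha> * mnm K \<alpha> x)" for x
    by (rule sum.cong) (auto simp: c'_def)
  finally show ?thesis unfolding mpoly_le_def using c by metis
qed

lemma mnm_zero: "mnm K (\<lambda>k\<in>K. 0) x = 1"
  unfolding mnm_def by simp

lemma mpoly_le_const: "finite K \<Longrightarrow> mpoly_le K e (\<lambda>x. a)"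
proof -
  assume fK: "finite K"
  have mem: "(\<lambda>k\<in>K. 0::nat) \<in> boxe K e" unfolding boxe_def by auto
  have "(\<Sum>\<alpha>\<in>boxe K e. (if \<alpha> = (\<lambda>k\<in>K. 0) then a else 0) * mnm K \<alpha> x) = a" for x
  proof -
    have "(\<Sum>\<alpha>\<in>boxe K e. (if \<alpha> = (\<lambda>k\<in>K. 0) then a else 0) * mnm K \<alpha> x)
      = (\<Sum>\<alpha>\<in>boxe K e. if \<alpha> = (\<lambda>k\<in>K. 0) then a * mnm K \<alpha> x else 0)"
      by (rule sum.cong) auto
    also have "\<dots> = a" using mem fK by (simp add: sum.delta' mnm_zero)
    finally show ?thesis .
  qed
  then show ?thesis unfolding mpoly_le_def by metis
qed

lemma mpoly_le_var:
  assumes fK: "finite K" and k0: "k0 \<in> K" shows "mpoly_le K 1 (\<lambda>x. x k0)"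
proof -
  define \<alpha>0 where "\<alpha>0 = (\<lambda>k\<in>K. if k = k0 then 1 else 0::nat)"
  have mem: "\<alpha>0 \<in> boxe K 1" unfolding boxe_def \<alpha>0_def by auto
  have m: "mnm K \<alpha>0 x = x k0" for x
  proof -
    have "mnm K \<alpha>0 x = (\<Prod>k\<in>K. if k = k0 then x k else 1)"
      unfolding mnm_def \<alpha>0_def by (rule prod.cong) auto
    also have "\<dots> = x k0" using fK k0 by (simp add: prod.delta)
    finally show ?thesis .
  qed
  have "(\<Sum>\<alpha>\<in>boxe K 1. (if \<alpha> = \<alpha>0 then 1 else 0) * mnm K \<alpha> x) = x k0" for x
  proof -
    have "(\<Sum>\<alpha>\<in>boxe K 1. (if \<alpha> = \<alpha>0 then 1 else 0) * mnm K \<alpha> x)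
      = (\<Sum>\<alpha>\<in>boxe K 1. if \<alpha> = \<alpha>0 then mnm K \<alpha> x else 0)"
      by (rule sum.cong) auto
    also have "\<dots> = x k0" using mem fK by (simp add: sum.delta' m)
    finally show ?thesis .
  qed
  then show ?thesis unfolding mpoly_le_def by metis
qed

lemma mpoly_le_add:
  assumes "mpoly_le K e f" "mpoly_le K e g" shows "mpoly_le K e (\<lambda>x. f x + g x)"
proof -
  obtain cf cg where "\<forall>x. f x = (\<Sum>\<alpha>\<in>boxe K e. cf \<alpha> * mnm K \<alpha> x)" "\<forall>x. g x = (\<Sum>\<alpha>\<in>boxe K e. cg \<alpha> * mnm K \<alpha> x)"
    using assms unfolding mpoly_le_def by blast
  then have "\<forall>x. f x + g x = (\<Sum>\<alpha>\<in>boxe K e. (cf \<alpha> + cg \<alpha>) * mnm K \<alpha> x)"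
    by (simp add: sum.distrib distrib_right)
  then show ?thesis unfolding mpoly_le_def by (rule exI[of _ "\<lambda>\<alpha>. cf \<alpha> + cg \<alpha>"])
qed

lemma mpoly_le_scale:
  assumes "mpoly_le K e f" shows "mpoly_le K e (\<lambda>x. a * f x)"
proof -
  obtain cf where "\<forall>x. f x = (\<Sum>\<alpha>\<in>boxe K e. cf \<alpha> * mnm K \<alpha> x)"
    using assms unfolding mpoly_le_def by blast
  then have "\<forall>x. a * f x = (\<Sum>\<alpha>\<in>boxe K e. (a * cf \<alpha>) * mnm K \<alpha> x)"
    by (simp add: sum_distrib_left mult.assoc)
  then show ?thesis unfolding mpoly_le_def by (rule exI[of _ "\<lambda>\<alpha>. a * cf \<alpha>"])
qed

lemma mnm_add: "mnm K (\<lambda>k\<in>K. \<alpha> k + \<beta> k) x = mnm K \<alpha> x * mnm K \<beta> x"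
  unfolding mnm_def by (simp add: prod.distrib[symmetric] power_add)

lemma mpoly_le_mult:
  assumes fK: "finite K" and "mpoly_le K e1 f" "mpoly_le K e2 g"
  shows "mpoly_le K (e1 + e2) (\<lambda>x. f x * g x)"
proof -
  obtain cf cg where cf: "\<forall>x. f x = (\<Sum>\<alpha>\<in>boxe K e1. cf \<alpha> * mnm K \<alpha> x)"
    and cg: "\<forall>x. g x = (\<Sum>\<alpha>\<in>boxe K e2. cg \<alpha> * mnm K \<alpha> x)"
    using assms unfolding mpoly_le_def by blast
  define S where "S = boxe K e1 \<times> boxe K e2"
  define s where "s z = (\<lambda>k\<in>K. fst z k + snd z k)" for z :: "('a \<Rightarrow> nat) \<times> ('a \<Rightarrow> nat)"
  have fS: "finite S" using fK S_def by simp
  have sS: "s ` S \<subseteq> boxe K (e1 + e2)"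
    unfolding S_def s_def boxe_def by (auto simp: PiE_iff add_mono)
  define c where "c \<gamma> = (\<Sum>z\<in>{z\<in>S. s z = \<gamma>}. cf (fst z) * cg (snd z))" for \<gamma>
  have "f x * g x = (\<Sum>\<gamma>\<in>boxe K (e1 + e2). c \<gamma> * mnm K \<gamma> x)" for x
  proof -
    have "f x * g x = (\<Sum>\<alpha>\<in>boxe K e1. \<Sum>\<beta>\<in>boxe K e2. (cf \<alpha> * mnm K \<alpha> x) * (cg \<beta> * mnm K \<beta> x))"
      using cf cg by (simp add: sum_product)
    also have "\<dots> = (\<Sum>z\<in>S. cf (fst z) * cg (snd z) * mnm K (s z) x)"
      unfolding S_def s_def sum.cartesian_product by (intro sum.cong refl) (auto simp: mnm_add mult_ac)
    also have "\<dots> = (\<Sum>\<gamma>\<in>boxe K (e1 + e2). \<Sum>z\<in>{z\<in>S. s z = \<gamma>}. cf (fst z) * cg (snd z) * mnm K (s z) x)"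
      by (rule sum.group[OF fS finite_boxe[OF fK] sS, symmetric])
    also have "\<dots> = (\<Sum>\<gamma>\<in>boxe K (e1 + e2). c \<gamma> * mnm K \<gamma> x)"
      unfolding c_def sum_distrib_right by (intro sum.cong refl) simp
    finally show ?thesis .
  qed
  then show ?thesis unfolding mpoly_le_def by blast
qed

lemma mpoly_le_sum:
  assumes fK: "finite K" and "finite S" "\<forall>i\<in>S. mpoly_le K e (f i)"
  shows "mpoly_le K e (\<lambda>x. \<Sum>i\<in>S. f i x)"
  using assms(2,3)
proof (induction S rule: finite_induct)
  case empty then show ?case by (simp add: mpoly_le_const[OF fK])
next
  case (insert i S)
  have "mpoly_le K e (\<lambda>x. f i x + (\<Sum>i\<in>S. f i x))"
    using insert by (intro mpoly_le_add) auto
  then show ?case using insert by simp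
qed

lemma mpoly_le_prod:
  assumes fK: "finite K" and "finite S" "\<forall>i\<in>S. mpoly_le K (d i) (f i)"
  shows "mpoly_le K (\<Sum>i\<in>S. d i) (\<lambda>x. \<Prod>i\<in>S. f i x)"
  using assms(2,3)
proof (induction S rule: finite_induct)
  case empty then show ?case by (simp add: mpoly_le_const[OF fK])
next
  case (insert i S)
  have "mpoly_le K (d i + (\<Sum>i\<in>S. d i)) (\<lambda>x. f i x * (\<Prod>i\<in>S. f i x))"
    using insert by (intro mpoly_le_mult[OF fK]) auto
  then show ?case using insert by simp
qed

lemma mpoly_le_power:
  assumes fK: "finite K" and "mpoly_le K e f"
  shows "mpoly_le K (e * j) (\<lambda>x. f x ^ j)"
proof (induction j)
  case 0 then show ?case by (simp add: mpoly_le_const[OF fK])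
next
  case (Suc j)
  have "mpoly_le K (e + e * j) (\<lambda>x. f x * f x ^ j)"
    by (rule mpoly_le_mult[OF fK assms(2) Suc])
  then show ?case by (simp add: algebra_simps)
qed

lemma mpoly_const: "finite K \<Longrightarrow> mpoly K (\<lambda>x. a)"
  unfolding mpoly_def using mpoly_le_const by (rule exI)

lemma mpoly_var: "finite K \<Longrightarrow> k \<in> K \<Longrightarrow> mpoly K (\<lambda>x. x k)"
  unfolding mpoly_def using mpoly_le_var by (rule exI)

lemma mpoly_add:
  assumes fK: "finite K" and "mpoly K f" "mpoly K g" shows "mpoly K (\<lambda>x. f x + g x)"
proof -
  obtain e1 e2 where "mpoly_le K e1 f" "mpoly_le K e2 g" using assms unfolding mpoly_def by blast
  then have "mpoly_le K (max e1 e2) f" "mpoly_le K (max e1 e2) g"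
    using mpoly_le_mono[OF fK, of e1 "max e1 e2" f] mpoly_le_mono[OF fK, of e2 "max e1 e2" g] by auto
  then have "mpoly_le K (max e1 e2) (\<lambda>x. f x + g x)" by (rule mpoly_le_add)
  then show ?thesis unfolding mpoly_def by (rule exI)
qed

lemma mpoly_mult:
  assumes fK: "finite K" and "mpoly K f" "mpoly K g" shows "mpoly K (\<lambda>x. f x * g x)"
proof -
  obtain e1 e2 where "mpoly_le K e1 f" "mpoly_le K e2 g" using assms unfolding mpoly_def by blast
  then have "mpoly_le K (e1 + e2) (\<lambda>x. f x * g x)" by (rule mpoly_le_mult[OF fK])
  then show ?thesis unfolding mpoly_def by (rule exI)
qed

lemma mpoly_scale: "mpoly K f \<Longrightarrow> mpoly K (\<lambda>x. a * f x)"
proof -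
  assume "mpoly K f"
  then obtain e where "mpoly_le K e f" unfolding mpoly_def by blast
  then have "mpoly_le K e (\<lambda>x. a * f x)" by (rule mpoly_le_scale)
  then show ?thesis unfolding mpoly_def by (rule exI)
qed

lemma mpoly_uminus: "mpoly K f \<Longrightarrow> mpoly K (\<lambda>x. - f x)"
  using mpoly_scale[of K f "-1"] by simp

lemma mpoly_diff:
  assumes fK: "finite K" and "mpoly K f" "mpoly K g" shows "mpoly K (\<lambda>x. f x - g x)"
  using mpoly_add[OF fK assms(2) mpoly_uminus[OF assms(3)]] by simp

lemma mpoly_sum:
  assumes fK: "finite K" and "finite S" "\<forall>i\<in>S. mpoly K (f i)"
  shows "mpoly K (\<lambda>x. \<Sum>i\<in>S. f i x)"
  using assms(2,3)
proof (induction S rule: finite_induct)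
  case empty then show ?case by (simp add: mpoly_const[OF fK])
next
  case (insert i S)
  have "mpoly K (\<lambda>x. f i x + (\<Sum>i\<in>S. f i x))"
    using insert by (intro mpoly_add[OF fK]) auto
  then show ?case using insert by simp
qed

lemma mpoly_common:
  assumes fK: "finite K" and "finite T" "\<forall>t\<in>T. mpoly K (p t)"
  shows "\<exists>e. \<forall>t\<in>T. mpoly_le K e (p t)"
  using assms(2,3)
proof (induction T rule: finite_induct)
  case empty then show ?case by simp
next
  case (insert t T)
  then obtain e where e: "\<forall>t\<in>T. mpoly_le K e (p t)" by auto
  obtain e' where e': "mpoly_le K e' (p t)" using insert.prems unfolding mpoly_def by auto
  have "\<forall>t\<in>T. mpoly_le K (max e e') (p t)"
    using e mpoly_le_mono[OF fK, of e "max e e'"] by simp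
  moreover have "mpoly_le K (max e e') (p t)"
    using e' mpoly_le_mono[OF fK, of e' "max e e'"] by simp
  ultimately show ?case by (intro exI[of _ "max e e'"]) simp
qed

lemma count_ineq:
  fixes s e k :: nat
  assumes "k < s" "1 \<le> e"
  shows "((s*e)^k * s * e + 1) ^ k < ((s*e)^k + 1) ^ s"
proof -
  define D where "D = (s*e)^k"
  have se: "1 \<le> s*e" using assms by simp
  have "D * s * e + 1 \<le> (D+1)*(s*e)" using se by (simp add: algebra_simps)
  then have "(D * s * e + 1)^k \<le> ((D+1)*(s*e))^k" by (rule power_mono) simp
  also have "\<dots> = (D+1)^k * D" by (subst power_mult_distrib) (simp add: D_def)
  also have "\<dots> < (D+1)^k * (D+1)" by simp
  also have "\<dots> = (D+1)^(Suc k)" by simp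
  also have "\<dots> \<le> (D+1)^s" using assms by (intro power_increasing) auto
  finally show ?thesis unfolding D_def .
qed

lemma alg_dep:
  fixes p :: "'t \<Rightarrow> ('k \<Rightarrow> real) \<Rightarrow> real" and q :: "('k \<Rightarrow> real) \<Rightarrow> real"
  assumes fK: "finite K" and fT: "finite T" and cardKT: "card K < card T"
    and p: "\<forall>t\<in>T. mpoly K (p t)" and q: "mpoly K q"
  shows "\<exists>DD c. (\<exists>\<alpha>\<in>boxe T DD. c \<alpha> \<noteq> 0) \<and>
     (\<forall>x. q x \<noteq> 0 \<longrightarrow> (\<Sum>\<alpha>\<in>boxe T DD. c \<alpha> * mnm T \<alpha> (\<lambda>t. p t x / q x)) = 0)"
proof -
  obtain e1 where e1: "\<forall>t\<in>T. mpoly_le K e1 (p t)" using mpoly_common[OF fK fT p] by blast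
  obtain e2 where e2: "mpoly_le K e2 q" using q unfolding mpoly_def by blast
  define e where "e = max e1 e2 + 1"
  have pe: "\<forall>t\<in>T. mpoly_le K e (p t)"
  proof
    fix t assume "t \<in> T"
    then show "mpoly_le K e (p t)" using mpoly_le_mono[OF fK, of e1 e "p t"] e1 e_def by auto
  qed
  have qe: "mpoly_le K e q" using mpoly_le_mono[OF fK, of e2 e q] e2 e_def by auto
  define s where "s = card T"
  define k where "k = card K"
  define DD where "DD = (s*e)^k"
  define EE where "EE = DD* s*e"
  define g where "g \<alpha> x = (\<Prod>t\<in>T. p t x ^ \<alpha> t) * q x ^ (DD* s - (\<Sum>t\<in>T. \<alpha> t))" for \<alpha> x
  have sumle: "(\<Sum>t\<in>T. \<alpha> t) \<le> DD* s" if "\<alpha> \<in> boxe T DD" for \<alpha>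
  proof -
    have "(\<Sum>t\<in>T. \<alpha> t) \<le> card T * DD"
      using sum_bounded_above[of T \<alpha> DD] that by (auto simp: boxe_def PiE_iff)
    then show ?thesis by (simp add: s_def mult.commute)
  qed
  have gEE: "mpoly_le K EE (g \<alpha>)" if \<alpha>: "\<alpha> \<in> boxe T DD" for \<alpha>
  proof -
    have 1: "mpoly_le K (\<Sum>t\<in>T. e * \<alpha> t) (\<lambda>x. \<Prod>t\<in>T. p t x ^ \<alpha> t)"
    proof (rule mpoly_le_prod[OF fK fT], rule ballI)
      fix t assume "t \<in> T"
      then show "mpoly_le K (e * \<alpha> t) (\<lambda>x. p t x ^ \<alpha> t)" using pe mpoly_le_power[OF fK] by blast
    qed
    have 2: "mpoly_le K (e * (DD* s - (\<Sum>t\<in>T. \<alpha> t))) (\<lambda>x. q x ^ (DD* s - (\<Sum>t\<in>T. \<alpha> t)))"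
      by (rule mpoly_le_power[OF fK qe])
    have 3: "mpoly_le K ((\<Sum>t\<in>T. e * \<alpha> t) + e * (DD* s - (\<Sum>t\<in>T. \<alpha> t))) (g \<alpha>)"
      unfolding g_def by (rule mpoly_le_mult[OF fK 1 2])
    have "(\<Sum>t\<in>T. e * \<alpha> t) + e * (DD* s - (\<Sum>t\<in>T. \<alpha> t)) = e * ((\<Sum>t\<in>T. \<alpha> t) + (DD* s - (\<Sum>t\<in>T. \<alpha> t)))"
      by (simp add: sum_distrib_left add_mult_distrib2)
    also have "\<dots> = EE" using sumle[OF \<alpha>] by (simp add: EE_def)
    finally show ?thesis using 3 by simp
  qed
  have "\<forall>\<alpha>\<in>boxe T DD. \<exists>c\<beta>. \<forall>x. g \<alpha> x = (\<Sum>\<beta>\<in>boxe K EE. c\<beta> \<beta> * mnm K \<beta> x)"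
    using gEE unfolding mpoly_le_def by blast
  then obtain L where L: "\<forall>\<alpha>\<in>boxe T DD. \<forall>x. g \<alpha> x = (\<Sum>\<beta>\<in>boxe K EE. L \<alpha> \<beta> * mnm K \<beta> x)"
    by metis
  have "k < s" using cardKT by (simp add: k_def s_def)
  moreover have "1 \<le> e" by (simp add: e_def)
  ultimately have "(EE+1)^k < (DD+1)^s" unfolding EE_def DD_def by (rule count_ineq)
  then have cardlt: "card (boxe K EE) < card (boxe T DD)"
    by (simp add: card_boxe fK fT k_def s_def)
  obtain c where c: "\<exists>\<alpha>\<in>boxe T DD. c \<alpha> \<noteq> 0" "\<forall>\<beta>\<in>boxe K EE. (\<Sum>\<alpha>\<in>boxe T DD. c \<alpha> * L \<alpha> \<beta>) = 0"
    using lin_dep[OF finite_boxe[OF fK] finite_boxe[OF fT] cardlt] by blast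
  have zero: "(\<Sum>\<alpha>\<in>boxe T DD. c \<alpha> * g \<alpha> x) = 0" for x
  proof -
    have "(\<Sum>\<alpha>\<in>boxe T DD. c \<alpha> * g \<alpha> x) = (\<Sum>\<alpha>\<in>boxe T DD. c \<alpha> * (\<Sum>\<beta>\<in>boxe K EE. L \<alpha> \<beta> * mnm K \<beta> x))"
      using L by (intro sum.cong refl) simp
    also have "\<dots> = (\<Sum>\<alpha>\<in>boxe T DD. \<Sum>\<beta>\<in>boxe K EE. c \<alpha> * L \<alpha> \<beta> * mnm K \<beta> x)"
      by (simp add: sum_distrib_left mult.assoc)
    also have "\<dots> = (\<Sum>\<beta>\<in>boxe K EE. \<Sum>\<alpha>\<in>boxe T DD. c \<alpha> * L \<alpha> \<beta> * mnm K \<beta> x)"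
      by (rule sum.swap)
    also have "\<dots> = (\<Sum>\<beta>\<in>boxe K EE. (\<Sum>\<alpha>\<in>boxe T DD. c \<alpha> * L \<alpha> \<beta>) * mnm K \<beta> x)"
      by (simp add: sum_distrib_right)
    also have "\<dots> = 0" using c(2) by simp
    finally show ?thesis .
  qed
  have "\<forall>x. q x \<noteq> 0 \<longrightarrow> (\<Sum>\<alpha>\<in>boxe T DD. c \<alpha> * mnm T \<alpha> (\<lambda>t. p t x / q x)) = 0"
  proof (intro allI impI)
    fix x assume qx: "q x \<noteq> 0"
    have m: "mnm T \<alpha> (\<lambda>t. p t x / q x) = g \<alpha> x / q x ^ (DD* s)" if \<alpha>: "\<alpha> \<in> boxe T DD" for \<alpha>
    proof -
      have "mnm T \<alpha> (\<lambda>t. p t x / q x) = (\<Prod>t\<in>T. p t x ^ \<alpha> t) / q x ^ (\<Sum>t\<in>T. \<alpha> t)"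
        unfolding mnm_def by (simp add: power_divide prod_dividef power_sum)
      moreover have "q x ^ (DD* s) = q x ^ (DD* s - (\<Sum>t\<in>T. \<alpha> t)) * q x ^ (\<Sum>t\<in>T. \<alpha> t)"
        using sumle[OF \<alpha>] by (simp add: power_add[symmetric])
      ultimately show ?thesis unfolding g_def using qx by simp
    qed
    have "(\<Sum>\<alpha>\<in>boxe T DD. c \<alpha> * mnm T \<alpha> (\<lambda>t. p t x / q x)) = (\<Sum>\<alpha>\<in>boxe T DD. c \<alpha> * g \<alpha> x / q x ^ (DD* s))"
      by (intro sum.cong refl) (simp add: m)
    also have "\<dots> = (\<Sum>\<alpha>\<in>boxe T DD. c \<alpha> * g \<alpha> x) / q x ^ (DD* s)"
      by (simp add: sum_divide_distrib)
    finally show "(\<Sum>\<alpha>\<in>boxe T DD. c \<alpha> * mnm T \<alpha> (\<lambda>t. p t x / q x)) = 0" using zero by simp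
  qed
  then show ?thesis using c(1) by blast
qed

lemma mnm_measurable[measurable]:
  "finite T \<Longrightarrow> (\<lambda>y. \<Sum>\<alpha>\<in>A. c \<alpha> * mnm T \<alpha> y) \<in> borel_measurable (PiM T (\<lambda>_. lborel))"
  unfolding mnm_def by measurable

lemma poly_split:
  assumes fT: "finite T" and tT: "t \<notin> T"
  shows "(\<Sum>\<alpha>\<in>boxe (insert t T) D. c \<alpha> * mnm (insert t T) \<alpha> z)
     = (\<Sum>k\<le>D. (\<Sum>\<beta>\<in>boxe T D. c (\<beta>(t:=k)) * mnm T \<beta> z) * z t ^ k)"
proof -
  have eq: "boxe (insert t T) D = (\<lambda>(k, \<beta>). \<beta>(t := k)) ` ({..D} \<times> boxe T D)"
    unfolding boxe_def by (rule PiE_insert_eq)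
  have inj: "inj_on (\<lambda>(k, \<beta>). \<beta>(t := k)) ({..D} \<times> boxe T D)"
  proof (rule inj_onI, clarify)
    fix k1 \<beta>1 k2 \<beta>2
    assume m: "\<beta>1 \<in> boxe T D" "\<beta>2 \<in> boxe T D" and e: "\<beta>1(t := k1) = \<beta>2(t := k2)"
    have "k1 = k2" using fun_cong[OF e, of t] by simp
    moreover have "\<beta>1 = \<beta>2"
    proof
      fix s show "\<beta>1 s = \<beta>2 s"
        using fun_cong[OF e, of s] m tT unfolding boxe_def
        by (cases "s = t") (auto simp: PiE_def extensional_def)
    qed
    ultimately show "k1 = k2 \<and> \<beta>1 = \<beta>2" by simp
  qed
  have m: "mnm (insert t T) (\<beta>(t := k)) z = z t ^ k * mnm T \<beta> z" for \<beta> k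
  proof -
    have "mnm (insert t T) (\<beta>(t := k)) z = z t ^ k * (\<Prod>s\<in>T. z s ^ (\<beta>(t := k)) s)"
      unfolding mnm_def using fT tT by simp
    also have "(\<Prod>s\<in>T. z s ^ (\<beta>(t := k)) s) = mnm T \<beta> z"
      unfolding mnm_def using tT by (intro prod.cong) auto
    finally show ?thesis .
  qed
  have "(\<Sum>\<alpha>\<in>boxe (insert t T) D. c \<alpha> * mnm (insert t T) \<alpha> z)
      = (\<Sum>x\<in>{..D} \<times> boxe T D. (\<lambda>\<alpha>. c \<alpha> * mnm (insert t T) \<alpha> z) ((\<lambda>(k, \<beta>). \<beta>(t := k)) x))"
    unfolding eq using sum.reindex[OF inj, of "\<lambda>\<alpha>. c \<alpha> * mnm (insert t T) \<alpha> z"] by (simp add: comp_def)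
  also have "\<dots> = (\<Sum>(k,\<beta>)\<in>{..D} \<times> boxe T D. c (\<beta>(t:=k)) * mnm T \<beta> z * z t ^ k)"
    by (intro sum.cong refl) (clarsimp simp: m mult_ac)
  also have "\<dots> = (\<Sum>k\<le>D. \<Sum>\<beta>\<in>boxe T D. c (\<beta>(t:=k)) * mnm T \<beta> z * z t ^ k)"
    by (rule sum.cartesian_product[symmetric])
  also have "\<dots> = (\<Sum>k\<le>D. (\<Sum>\<beta>\<in>boxe T D. c (\<beta>(t:=k)) * mnm T \<beta> z) * z t ^ k)"
    by (simp add: sum_distrib_right)
  finally show ?thesis .
qed

lemma poly_null:
  fixes T :: "'t set"
  assumes "finite T"
  shows "\<alpha>0 \<in> boxe T D \<Longrightarrow> c \<alpha>0 \<noteq> 0 \<Longrightarrow>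
    {y \<in> space (PiM T (\<lambda>_. lborel)). (\<Sum>\<alpha>\<in>boxe T D. c \<alpha> * mnm T \<alpha> y) = 0} \<in> null_sets (PiM T (\<lambda>_. lborel))"
  using assms
proof (induction T arbitrary: c \<alpha>0 rule: finite_induct)
  case empty
  have "boxe ({}::'t set) D = {\<lambda>_. undefined}" unfolding boxe_def by simp
  then have "\<alpha>0 = (\<lambda>_. undefined)" using empty by simp
  then have "(\<Sum>\<alpha>\<in>boxe {} D. c \<alpha> * mnm {} \<alpha> y) \<noteq> 0" for y :: "'t \<Rightarrow> real"
    using empty \<open>boxe {} D = _\<close> by (simp add: mnm_def)
  then show ?case by simp
next
  case (insert t T)
  let ?M = "\<lambda>_::'t. lborel :: real measure"
  let ?P = "\<lambda>y. (\<Sum>\<alpha>\<in>boxe (insert t T) D. c \<alpha> * mnm (insert t T) \<alpha> y)"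
  define Z where "Z = {y \<in> space (PiM (insert t T) ?M). ?P y = 0}"
  have fT: "finite (insert t T)" using insert by simp
  have Zm: "Z \<in> sets (PiM (T \<union> {t}) ?M)"
    unfolding Z_def using fT by simp
  define k0 where "k0 = \<alpha>0 t"
  define \<beta>0 where "\<beta>0 = restrict \<alpha>0 T"
  have \<beta>0: "\<beta>0 \<in> boxe T D" using insert.prems(1) unfolding \<beta>0_def boxe_def by (auto simp: PiE_iff)
  have a0: "\<beta>0(t := k0) = \<alpha>0"
  proof
    fix s show "(\<beta>0(t := k0)) s = \<alpha>0 s"
      using insert.prems(1) unfolding \<beta>0_def k0_def boxe_def by (auto simp: PiE_def extensional_def)
  qed
  have k0D: "k0 \<le> D" using insert.prems(1) unfolding k0_def boxe_def by (auto simp: PiE_iff)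
  define Pk where "Pk k x = (\<Sum>\<beta>\<in>boxe T D. c (\<beta>(t:=k)) * mnm T \<beta> x)" for k x
  define N' where "N' = {x \<in> space (PiM T ?M). Pk k0 x = 0}"
  have N': "N' \<in> null_sets (PiM T ?M)"
    unfolding N'_def Pk_def
    by (rule insert.IH[OF \<beta>0]) (use a0 insert.prems in auto)
  interpret product_sigma_finite ?M by standard
  have "emeasure (PiM (T \<union> {t}) ?M) Z =
     (\<integral>\<^sup>+x. emeasure (PiM {t} ?M) ((\<lambda>y. merge T {t} (x, y)) -` Z \<inter> space (PiM {t} ?M)) \<partial>PiM T ?M)"
    by (rule emeasure_fold_integral) (use insert Zm in auto)
  also have "\<dots> = (\<integral>\<^sup>+x. 0 \<partial>PiM T ?M)"
  proof (rule nn_integral_cong_AE)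
    show "AE x in PiM T ?M. emeasure (PiM {t} ?M) ((\<lambda>y. merge T {t} (x, y)) -` Z \<inter> space (PiM {t} ?M)) = 0"
      using AE_not_in[OF N'] AE_space
    proof (eventually_elim)
      case (elim x)
      show ?case
      proof (cases "x \<in> space (PiM T ?M)")
        case False
        then show ?thesis using elim by simp
      next
        case True
        then have nz: "Pk k0 x \<noteq> 0" using elim unfolding N'_def by simp
        define R where "R = {s::real. (\<Sum>k\<le>D. Pk k x * s ^ k) = 0}"
        have fR: "finite R" unfolding R_def
          by (rule polyfun_roots_finite[of "\<lambda>k. Pk k x" k0]) (use nz k0D in auto)
        have sub: "(\<lambda>y. merge T {t} (x, y)) -` Z \<inter> space (PiM {t} ?M) \<subseteq> {y \<in> space (PiM {t} ?M). y t \<in> R}"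
        proof clarify
          fix y assume y: "y \<in> space (PiM {t} ?M)" "merge T {t} (x, y) \<in> Z"
          let ?z = "merge T {t} (x, y)"
          have "?P ?z = 0" using y unfolding Z_def by simp
          moreover have "?P ?z = (\<Sum>k\<le>D. Pk k ?z * ?z t ^ k)"
            unfolding Pk_def by (rule poly_split) (use insert in auto)
          moreover have "Pk k ?z = Pk k x" for k
            unfolding Pk_def mnm_def using insert.hyps(2)
            by (intro sum.cong refl arg_cong2[where f="(*)"] prod.cong) (auto simp: merge_def)
          moreover have "?z t = y t" using insert.hyps(2) by (simp add: merge_def)
          ultimately show "y t \<in> R" unfolding R_def by (simp add: mult.commute)
        qed
        have Rset: "{y \<in> space (PiM {t} ?M). y t \<in> R} = PiE {t} (\<lambda>_. R)"
          by (auto simp: space_PiM PiE_iff extensional_def)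
        have "emeasure (PiM {t} ?M) (PiE {t} (\<lambda>_. R)) = (\<Prod>i\<in>{t}. emeasure lborel R)"
          by (rule emeasure_PiM) (use fR in \<open>auto intro!: borel_closed finite_imp_closed\<close>)
        also have "\<dots> = 0" using finite_imp_null_set_lborel[OF fR] by (simp add: null_setsD1)
        finally have "emeasure (PiM {t} ?M) {y \<in> space (PiM {t} ?M). y t \<in> R} = 0" using Rset by simp
        moreover have "{y \<in> space (PiM {t} ?M). y t \<in> R} \<in> sets (PiM {t} ?M)"
          using fR by (intro sets_Collect_single) (auto intro!: borel_closed finite_imp_closed)
        ultimately show ?thesis using sub
          by (metis (no_types, lifting) emeasure_eq_0)
      qed
    qed
  qed
  also have "\<dots> = 0" by simp
  finally have "emeasure (PiM (insert t T) ?M) Z = 0" by simp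
  moreover have "Z \<in> sets (PiM (insert t T) ?M)" using Zm by simp
  ultimately have "Z \<in> null_sets (PiM (insert t T) ?M)" by (intro null_setsI)
  then show ?case unfolding Z_def .
qed

definition ratq :: "'k set \<Rightarrow> (('k \<Rightarrow> real) \<Rightarrow> real) \<Rightarrow> (('k \<Rightarrow> real) \<Rightarrow> real) \<Rightarrow> bool" where
  "ratq K q f \<longleftrightarrow> (\<exists>p. mpoly K p \<and> (\<forall>x. q x \<noteq> 0 \<longrightarrow> f x = p x / q x))"

context
  fixes K :: "'k set" and q :: "('k \<Rightarrow> real) \<Rightarrow> real"
  assumes fK: "finite K" and q: "mpoly K q"
begin

lemma ratq_poly: "mpoly K f \<Longrightarrow> ratq K q f"
  unfolding ratq_def
  by (intro exI[of _ "\<lambda>x. f x * q x"] conjI mpoly_mult[OF fK _ q]) auto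

lemma ratq_div: "mpoly K p \<Longrightarrow> ratq K q (\<lambda>x. p x / q x)"
  unfolding ratq_def by blast

lemma ratq_add:
  assumes "ratq K q f" "ratq K q g" shows "ratq K q (\<lambda>x. f x + g x)"
proof -
  obtain pf pg where "mpoly K pf" "\<forall>x. q x \<noteq> 0 \<longrightarrow> f x = pf x / q x"
    "mpoly K pg" "\<forall>x. q x \<noteq> 0 \<longrightarrow> g x = pg x / q x"
    using assms unfolding ratq_def by blast
  then show ?thesis unfolding ratq_def
    by (intro exI[of _ "\<lambda>x. pf x + pg x"] conjI mpoly_add[OF fK]) (auto simp: add_divide_distrib)
qed

lemma ratq_pmult:
  assumes "mpoly K g" "ratq K q f" shows "ratq K q (\<lambda>x. g x * f x)"
proof -
  obtain pf where "mpoly K pf" "\<forall>x. q x \<noteq> 0 \<longrightarrow> f x = pf x / q x"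
    using assms unfolding ratq_def by blast
  then show ?thesis unfolding ratq_def using assms(1)
    by (intro exI[of _ "\<lambda>x. g x * pf x"] conjI mpoly_mult[OF fK]) auto
qed

lemma ratq_uminus: "ratq K q f \<Longrightarrow> ratq K q (\<lambda>x. - f x)"
  using ratq_pmult[OF mpoly_const[OF fK, of "-1"]] by simp

lemma ratq_diff: "ratq K q f \<Longrightarrow> ratq K q g \<Longrightarrow> ratq K q (\<lambda>x. f x - g x)"
  using ratq_add[OF _ ratq_uminus] by simp

lemma ratq_sum:
  assumes "finite S" "\<forall>i\<in>S. ratq K q (f i)"
  shows "ratq K q (\<lambda>x. \<Sum>i\<in>S. f i x)"
  using assms
proof (induction S rule: finite_induct)
  case empty then show ?case using ratq_poly[OF mpoly_const[OF fK, of 0]] by simp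
next
  case (insert i S)
  have "ratq K q (\<lambda>x. f i x + (\<Sum>i\<in>S. f i x))"
    using insert by (intro ratq_add) auto
  then show ?case using insert by simp
qed

end

lemma image_null:
  fixes F :: "('k \<Rightarrow> real) \<Rightarrow> 't \<Rightarrow> real" and q :: "('k \<Rightarrow> real) \<Rightarrow> real"
  assumes fK: "finite K" and fT: "finite T" and cardKT: "card K < card T"
    and q: "mpoly K q" and F: "\<forall>t\<in>T. ratq K q (\<lambda>x. F x t)"
  shows "\<exists>N\<in>null_sets (PiM T (\<lambda>_. lborel)). \<forall>y\<in>space (PiM T (\<lambda>_. lborel)).
           (\<exists>x. q x \<noteq> 0 \<and> (\<forall>t\<in>T. y t = F x t)) \<longrightarrow> y \<in> N"
proof -
  have "\<forall>t\<in>T. \<exists>p. mpoly K p \<and> (\<forall>x. q x \<noteq> 0 \<longrightarrow> F x t = p x / q x)"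
    using F unfolding ratq_def by blast
  then obtain p where p: "\<forall>t\<in>T. mpoly K (p t) \<and> (\<forall>x. q x \<noteq> 0 \<longrightarrow> F x t = p t x / q x)"
    by metis
  obtain D c where c: "\<exists>\<alpha>\<in>boxe T D. c \<alpha> \<noteq> 0"
    and z: "\<forall>x. q x \<noteq> 0 \<longrightarrow> (\<Sum>\<alpha>\<in>boxe T D. c \<alpha> * mnm T \<alpha> (\<lambda>t. p t x / q x)) = 0"
    using alg_dep[OF fK fT cardKT, of p q] p q by blast
  define N where "N = {y \<in> space (PiM T (\<lambda>_. lborel)). (\<Sum>\<alpha>\<in>boxe T D. c \<alpha> * mnm T \<alpha> y) = 0}"
  have N: "N \<in> null_sets (PiM T (\<lambda>_. lborel))"
    using c poly_null[OF fT] unfolding N_def by blast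
  have "\<forall>y\<in>space (PiM T (\<lambda>_. lborel)). (\<exists>x. q x \<noteq> 0 \<and> (\<forall>t\<in>T. y t = F x t)) \<longrightarrow> y \<in> N"
  proof (intro ballI impI)
    fix y assume y: "y \<in> space (PiM T (\<lambda>_. lborel))" and "\<exists>x. q x \<noteq> 0 \<and> (\<forall>t\<in>T. y t = F x t)"
    then obtain x where x: "q x \<noteq> 0" "\<forall>t\<in>T. y t = F x t" by blast
    have "mnm T \<alpha> y = mnm T \<alpha> (\<lambda>t. p t x / q x)" for \<alpha>
      unfolding mnm_def using x p by (intro prod.cong refl) auto
    then show "y \<in> N" unfolding N_def using y z x(1) by simp
  qed
  then show ?thesis using N by blast
qed

datatype pidx = PA nat nat nat | PG nat nat | PZ nat nat | PM nat

lemma finite_coord_index[simp]: "finite (coord_index n m)"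
proof -
  have "coord_index n m \<subseteq> {..<m} \<times> {..<n} \<times> {..<n}" unfolding coord_index_def by auto
  then show ?thesis by (rule finite_subset) auto
qed

lemma mpoly_if: "(P \<Longrightarrow> mpoly K f) \<Longrightarrow> (\<not> P \<Longrightarrow> mpoly K g) \<Longrightarrow> mpoly K (\<lambda>x. if P then f x else g x)"
  by (cases P) auto

lemma ratq_if: "(P \<Longrightarrow> ratq K q f) \<Longrightarrow> (\<not> P \<Longrightarrow> ratq K q g) \<Longrightarrow> ratq K q (\<lambda>x. if P then f x else g x)"
  by (cases P) auto

locale chdata =
  fixes n m :: nat and b :: "nat \<Rightarrow> real" and I J :: "nat set" and i0 i1 a :: nat
begin

definition Kset :: "pidx set" where
 "Kset = (\<lambda>(i,u,v). PA i u v) ` {(i,u,v) \<in> coord_index n m. (i \<in> I \<and> i \<noteq> i0 \<longrightarrow> (u,v) \<noteq> (a,a)) \<and> (i = i0 \<longrightarrow> u \<notin> J \<and> v \<notin> J)}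
   \<union> (\<lambda>(c,j). PG c j) ` (({..<n} - J) \<times> J)
   \<union> (\<lambda>(j,j'). PZ j j') ` {(j,j') \<in> J \<times> J. j \<le> j'}
   \<union> PM ` (I - {i0, i1})"

fun iota :: "pidx \<Rightarrow> nat \<times> nat \<times> nat" where
  "iota (PA i u v) = (i, u, v)"
| "iota (PG c j) = (i0, min c j, max c j)"
| "iota (PZ j j') = (i0, j, j')"
| "iota (PM i) = (i, a, a)"

definition Qf :: "(pidx \<Rightarrow> real) \<Rightarrow> nat \<Rightarrow> nat \<Rightarrow> real" where
  "Qf x w j = (if w \<in> J then (if w = j then 1 else 0) else x (PG w j))"
definition Zf :: "(pidx \<Rightarrow> real) \<Rightarrow> nat \<Rightarrow> nat \<Rightarrow> real" where
  "Zf x j j' = x (PZ (min j j') (max j j'))"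
definition Xf :: "(pidx \<Rightarrow> real) \<Rightarrow> nat \<Rightarrow> nat \<Rightarrow> real" where
  "Xf x u v = (\<Sum>j\<in>J. \<Sum>j'\<in>J. Qf x u j * Zf x j j' * Qf x v j')"
definition qf :: "(pidx \<Rightarrow> real) \<Rightarrow> real" where
  "qf x = Xf x a a"
definition muf :: "(pidx \<Rightarrow> real) \<Rightarrow> nat \<Rightarrow> real" where
  "muf x i = (if i = i0 then 1 else if i = i1 then (- b i0 - (\<Sum>i'\<in>I - {i0, i1}. x (PM i') * b i')) / b i1 else x (PM i))"
definition cfree :: "(pidx \<Rightarrow> real) \<Rightarrow> nat \<Rightarrow> nat \<Rightarrow> nat \<Rightarrow> real" where
  "cfree x i u v = (if i \<in> I \<and> u = a \<and> v = a then 0 else x (PA i u v))"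
definition cA :: "(pidx \<Rightarrow> real) \<Rightarrow> nat \<Rightarrow> nat \<Rightarrow> nat \<Rightarrow> real" where
  "cA x i u v = (if i \<in> I \<and> u = a \<and> v = a
      then (b i - frob_inner n (\<lambda>u' v'. cfree x i (min u' v') (max u' v')) (Xf x)) / qf x
      else x (PA i u v))"
definition Af :: "(pidx \<Rightarrow> real) \<Rightarrow> nat \<Rightarrow> nat \<Rightarrow> nat \<Rightarrow> real" where
  "Af x i u w = cA x i (min u w) (max u w)"
definition Wf :: "(pidx \<Rightarrow> real) \<Rightarrow> nat \<Rightarrow> nat \<Rightarrow> real" where
  "Wf x u j = - (\<Sum>i\<in>I - {i0}. muf x i * (\<Sum>w<n. Af x i u w * Qf x w j))"
definition Bf :: "(pidx \<Rightarrow> real) \<Rightarrow> nat \<Rightarrow> nat \<Rightarrow> real" where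
  "Bf x c j = Wf x c j - (\<Sum>c'\<in>{..<n} - J. x (PA i0 (min c c') (max c c')) * x (PG c' j))"
definition Cf :: "(pidx \<Rightarrow> real) \<Rightarrow> nat \<Rightarrow> nat \<Rightarrow> real" where
  "Cf x j j' = Wf x j j' - (\<Sum>c\<in>{..<n} - J. Bf x c j * x (PG c j'))"
definition Fmap :: "(pidx \<Rightarrow> real) \<Rightarrow> nat \<times> nat \<times> nat \<Rightarrow> real" where
  "Fmap x t = (case t of (i, u, v) \<Rightarrow>
     if i = i0 then (if u \<notin> J \<and> v \<notin> J then x (PA i0 u v)
                     else if u \<in> J \<and> v \<in> J then Cf x u v
                     else if u \<in> J then Bf x v u else Bf x u v)
     else cA x i u v)"

end

locale chvalid = chdata +
  assumes I: "I \<subseteq> {..<m}" and i0: "i0 \<in> I" and i1: "i1 \<in> I" and i01: "i0 \<noteq> i1"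
    and J: "J \<subseteq> {..<n}" and a: "a < n"
begin

lemma fJ: "finite J" using J finite_subset by blast
lemma fI: "finite I" using I finite_subset by blast

lemma fK: "finite Kset"
  unfolding Kset_def using fJ fI
  by (intro finite_UnI finite_imageI)
     (auto intro: finite_subset[OF _ finite_coord_index] finite_subset[of _ "J \<times> J"])

lemma inj_iota: "inj_on iota Kset"
proof (rule inj_onI)
  fix x y assume x: "x \<in> Kset" and y: "y \<in> Kset" and e: "iota x = iota y"
  show "x = y"
    using x y e i01 unfolding Kset_def
    by (auto simp: min_def max_def split: if_splits)
qed

lemma iota_into: "iota ` Kset \<subseteq> coord_index n m - {(i1, a, a)}"
  using I J a i0 i1 i01 unfolding Kset_def coord_index_def
  by (auto simp: min_def max_def)

lemma card_K: "card Kset < card (coord_index n m)"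
proof -
  have "card Kset = card (iota ` Kset)" using inj_iota by (simp add: card_image)
  also have "\<dots> \<le> card (coord_index n m - {(i1, a, a)})"
    by (rule card_mono[OF _ iota_into]) simp
  also have "\<dots> < card (coord_index n m)"
  proof (rule psubset_card_mono)
    show "coord_index n m - {(i1, a, a)} \<subset> coord_index n m"
      using I i1 a unfolding coord_index_def by auto
  qed simp
  finally show ?thesis .
qed

lemma memPA: "(i,u,v) \<in> coord_index n m \<Longrightarrow> (i \<in> I \<and> i \<noteq> i0 \<longrightarrow> (u,v) \<noteq> (a,a)) \<Longrightarrow> (i = i0 \<longrightarrow> u \<notin> J \<and> v \<notin> J) \<Longrightarrow> PA i u v \<in> Kset"
  unfolding Kset_def by (intro UnI1) (auto simp: image_iff)
lemma memPG: "c < n \<Longrightarrow> c \<notin> J \<Longrightarrow> j \<in> J \<Longrightarrow> PG c j \<in> Kset"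
  unfolding Kset_def by (intro UnI1 UnI2) (auto simp: image_iff)
lemma memPZ: "j \<in> J \<Longrightarrow> j' \<in> J \<Longrightarrow> j \<le> j' \<Longrightarrow> PZ j j' \<in> Kset"
  unfolding Kset_def by (intro UnI1 UnI2) (auto simp: image_iff)
lemma memPM: "i \<in> I \<Longrightarrow> i \<noteq> i0 \<Longrightarrow> i \<noteq> i1 \<Longrightarrow> PM i \<in> Kset"
  unfolding Kset_def by (intro UnI2) (auto simp: image_iff)

lemma mp_var: "k \<in> Kset \<Longrightarrow> mpoly Kset (\<lambda>x. x k)"
  by (rule mpoly_var[OF fK])
lemma mp_const: "mpoly Kset (\<lambda>x. c)"
  by (rule mpoly_const[OF fK])

lemma mp_Qf: "w < n \<Longrightarrow> j \<in> J \<Longrightarrow> mpoly Kset (\<lambda>x. Qf x w j)"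
  unfolding Qf_def by (intro mpoly_if mp_const mp_var memPG) auto

lemma mp_Zf: "j \<in> J \<Longrightarrow> j' \<in> J \<Longrightarrow> mpoly Kset (\<lambda>x. Zf x j j')"
  unfolding Zf_def by (intro mp_var memPZ) (auto simp: min_def max_def)

lemma mp_Xf: assumes "u < n" "v < n" shows "mpoly Kset (\<lambda>x. Xf x u v)"
  unfolding Xf_def
proof (intro mpoly_sum[OF fK fJ] ballI)
  fix j j' assume "j \<in> J" "j' \<in> J"
  then show "mpoly Kset (\<lambda>x. Qf x u j * Zf x j j' * Qf x v j')"
    using assms by (intro mpoly_mult[OF fK] mp_Qf mp_Zf) auto
qed

lemma mp_qf: "mpoly Kset qf"
  unfolding qf_def using mp_Xf[OF a a] by simp

lemma mp_muf: assumes "i \<in> I" "i \<noteq> i0" shows "mpoly Kset (\<lambda>x. muf x i)"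
proof -
  have s: "mpoly Kset (\<lambda>x. \<Sum>i'\<in>I - {i0, i1}. x (PM i') * b i')"
  proof (intro mpoly_sum[OF fK] ballI)
    fix i' assume "i' \<in> I - {i0, i1}"
    then show "mpoly Kset (\<lambda>x. x (PM i') * b i')"
      by (intro mpoly_mult[OF fK] mp_var memPM mp_const) auto
  qed (use fI in auto)
  have "mpoly Kset (\<lambda>x. (1 / b i1) * (- b i0 - (\<Sum>i'\<in>I - {i0, i1}. x (PM i') * b i')))"
    by (intro mpoly_scale mpoly_diff[OF fK] mp_const s)
  then have "mpoly Kset (\<lambda>x. (- b i0 - (\<Sum>i'\<in>I - {i0, i1}. x (PM i') * b i')) / b i1)"
    by simp
  then show ?thesis unfolding muf_def using assms
    by (intro mpoly_if mp_const mp_var memPM) auto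
qed

lemma mp_frob: assumes "i < m" "i \<noteq> i0"
  shows "mpoly Kset (\<lambda>x. frob_inner n (\<lambda>u' v'. cfree x i (min u' v') (max u' v')) (Xf x))"
  unfolding frob_inner_def
proof (intro mpoly_sum[OF fK] ballI)
  fix u' v' assume "u' \<in> {..<n}" "v' \<in> {..<n}"
  then show "mpoly Kset (\<lambda>x. cfree x i (min u' v') (max u' v') * Xf x u' v')"
    unfolding cfree_def using assms
    by (intro mpoly_mult[OF fK] mp_Xf mpoly_if mp_const mp_var memPA)
       (auto simp: coord_index_def min_def max_def)
qed auto

lemma rq_poly: "mpoly Kset f \<Longrightarrow> ratq Kset qf f"
  by (rule ratq_poly[OF fK mp_qf])

lemma rq_cA: assumes "i < m" "i \<noteq> i0" "u \<le> v" "v < n"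
  shows "ratq Kset qf (\<lambda>x. cA x i u v)"
  unfolding cA_def
proof (intro ratq_if)
  show "ratq Kset qf (\<lambda>x. (b i - frob_inner n (\<lambda>u' v'. cfree x i (min u' v') (max u' v')) (Xf x)) / qf x)"
    by (intro ratq_div[OF fK mp_qf] mpoly_diff[OF fK] mp_const mp_frob assms)
  show "\<not> (i \<in> I \<and> u = a \<and> v = a) \<Longrightarrow> ratq Kset qf (\<lambda>x. x (PA i u v))"
    using assms by (intro rq_poly mp_var memPA) (auto simp: coord_index_def)
qed

lemma rq_Af: assumes "i < m" "i \<noteq> i0" "u < n" "w < n"
  shows "ratq Kset qf (\<lambda>x. Af x i u w)"
  unfolding Af_def using assms by (intro rq_cA) auto

lemma rq_Wf: assumes "u < n" "j \<in> J"
  shows "ratq Kset qf (\<lambda>x. Wf x u j)"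
  unfolding Wf_def
proof (intro ratq_uminus[OF fK mp_qf] ratq_sum[OF fK mp_qf] ballI)
  fix i assume i: "i \<in> I - {i0}"
  show "ratq Kset qf (\<lambda>x. muf x i * (\<Sum>w<n. Af x i u w * Qf x w j))"
  proof (rule ratq_pmult[OF fK mp_qf])
    show "mpoly Kset (\<lambda>x. muf x i)" using i by (intro mp_muf) auto
    show "ratq Kset qf (\<lambda>x. \<Sum>w<n. Af x i u w * Qf x w j)"
    proof (rule ratq_sum[OF fK mp_qf], simp, rule ballI)
    fix w assume "w \<in> {..<n}"
    have "ratq Kset qf (\<lambda>x. Qf x w j * Af x i u w)"
      using i I assms \<open>w \<in> _\<close> by (intro ratq_pmult[OF fK mp_qf] mp_Qf rq_Af) auto
    then show "ratq Kset qf (\<lambda>x. Af x i u w * Qf x w j)" by (simp add: mult.commute)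
    qed
  qed
qed (use fI in auto)

lemma rq_Bf: assumes "c < n" "c \<notin> J" "j \<in> J"
  shows "ratq Kset qf (\<lambda>x. Bf x c j)"
  unfolding Bf_def
proof (intro ratq_diff[OF fK mp_qf] rq_Wf rq_poly mpoly_sum[OF fK] ballI)
  fix c' assume "c' \<in> {..<n} - J"
  then show "mpoly Kset (\<lambda>x. x (PA i0 (min c c') (max c c')) * x (PG c' j))"
    using assms i0 I
    by (intro mpoly_mult[OF fK] mp_var memPA memPG) (auto simp: coord_index_def min_def max_def)
qed (use assms in auto)

lemma rq_Cf: assumes "j \<in> J" "j' \<in> J"
  shows "ratq Kset qf (\<lambda>x. Cf x j j')"
  unfolding Cf_def
proof (intro ratq_diff[OF fK mp_qf] rq_Wf ratq_sum[OF fK mp_qf] ballI)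
  fix c assume c: "c \<in> {..<n} - J"
  have "ratq Kset qf (\<lambda>x. x (PG c j') * Bf x c j)"
    using c assms by (intro ratq_pmult[OF fK mp_qf] mp_var memPG rq_Bf) auto
  then show "ratq Kset qf (\<lambda>x. Bf x c j * x (PG c j'))" by (simp add: mult.commute)
qed (use assms J in auto)

lemma rq_Fmap: assumes t: "t \<in> coord_index n m"
  shows "ratq Kset qf (\<lambda>x. Fmap x t)"
proof -
  obtain i u v where t': "t = (i, u, v)" "i < m" "u \<le> v" "v < n"
    using t unfolding coord_index_def by auto
  show ?thesis
    unfolding Fmap_def t'(1) prod.case
    using t'
    by (intro ratq_if rq_poly mp_var memPA rq_Cf rq_Bf rq_cA)
       (auto simp: coord_index_def i0[THEN subsetD[OF I]])
qed

end

definition Qm :: "nat set \<Rightarrow> (nat \<Rightarrow> nat \<Rightarrow> real) \<Rightarrow> nat \<Rightarrow> nat \<Rightarrow> real" where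
  "Qm J G w j = (if w \<in> J then (if w = j then 1 else 0) else G w j)"

context chvalid
begin

lemma cover:
  fixes c :: "nat \<times> nat \<times> nat \<Rightarrow> real" and Y G :: "nat \<Rightarrow> nat \<Rightarrow> real" and mu :: "nat \<Rightarrow> real"
  assumes fr: "\<forall>i\<in>I. frob_inner n (sym_mats_of c i) (gram p Y) = b i"
    and mu0: "mu i0 = 1"
    and SQ: "\<forall>u<n. \<forall>j\<in>J. (\<Sum>i\<in>I. mu i * (\<Sum>w<n. sym_mats_of c i u w * Qm J G w j)) = 0"
    and span: "\<forall>w<n. \<forall>l<p. Y w l = (\<Sum>j\<in>J. Qm J G w j * Y j l)"
    and Xa: "gram p Y a a \<noteq> 0"
    and mub: "(\<Sum>i\<in>I. mu i * b i) = 0"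
    and b1: "b i1 \<noteq> 0"
  shows "\<exists>x. qf x \<noteq> 0 \<and> (\<forall>t\<in>coord_index n m. c t = Fmap x t)"
proof -
  define X where "X = gram p Y"
  define A where "A = sym_mats_of c"
  define x where "x k = (case k of PA i u v \<Rightarrow> c (i,u,v) | PG w j \<Rightarrow> G w j | PZ j j' \<Rightarrow> X j j' | PM i \<Rightarrow> mu i)" for k
  have Q: "Qf x w j = Qm J G w j" for w j
    unfolding Qf_def Qm_def x_def by simp
  have Xsym: "X u v = X v u" for u v
    unfolding X_def gram_def by (simp add: mult.commute)
  have Z: "Zf x j j' = X j j'" for j j'
    unfolding Zf_def x_def using Xsym by (cases "j \<le> j'") (auto simp: min_def max_def)
  have Xf: "Xf x u v = X u v" if uv: "u < n" "v < n" for u v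
  proof -
    have "X u v = (\<Sum>l<p. (\<Sum>j\<in>J. Qm J G u j * Y j l) * (\<Sum>j'\<in>J. Qm J G v j' * Y j' l))"
      unfolding X_def gram_def using span uv by (intro sum.cong refl) auto
    also have "\<dots> = (\<Sum>l<p. \<Sum>j\<in>J. \<Sum>j'\<in>J. Qm J G u j * Qm J G v j' * (Y j l * Y j' l))"
      by (simp add: sum_product mult_ac)
    also have "\<dots> = (\<Sum>j\<in>J. \<Sum>l<p. \<Sum>j'\<in>J. Qm J G u j * Qm J G v j' * (Y j l * Y j' l))"
      by (rule sum.swap)
    also have "\<dots> = (\<Sum>j\<in>J. \<Sum>j'\<in>J. \<Sum>l<p. Qm J G u j * Qm J G v j' * (Y j l * Y j' l))"
      by (intro sum.cong refl sum.swap)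
    also have "\<dots> = (\<Sum>j\<in>J. \<Sum>j'\<in>J. Qm J G u j * X j j' * Qm J G v j')"
      unfolding X_def gram_def by (simp add: sum_distrib_left mult_ac)
    finally show ?thesis unfolding Xf_def Q Z by simp
  qed
  have qx: "qf x \<noteq> 0" using Xf[OF a a] Xa unfolding qf_def X_def by simp
  have fI: "finite I" by (rule fI)
  have mu: "muf x i = mu i" if i: "i \<in> I" for i
  proof -
    consider "i = i0" | "i = i1" | "i \<noteq> i0" "i \<noteq> i1" by blast
    then show ?thesis
    proof cases
      case 1 then show ?thesis by (simp add: muf_def mu0)
    next
      case 2
      have "(\<Sum>i\<in>I. mu i * b i) = mu i0 * b i0 + (\<Sum>i\<in>I - {i0}. mu i * b i)"
        using fI i0 by (simp add: sum.remove)
      also have "(\<Sum>i\<in>I - {i0}. mu i * b i) = mu i1 * b i1 + (\<Sum>i\<in>I - {i0} - {i1}. mu i * b i)"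
        using fI i1 i01 by (subst sum.remove) auto
      finally have "b i0 + mu i1 * b i1 + (\<Sum>i\<in>I - {i0, i1}. mu i * b i) = 0"
        using mub mu0 by (simp add: Diff_insert2[symmetric] add.assoc)
      then have "mu i1 = (- b i0 - (\<Sum>i\<in>I - {i0, i1}. mu i * b i)) / b i1"
        using b1 by (simp add: field_simps)
      moreover have "(\<Sum>i'\<in>I - {i0, i1}. x (PM i') * b i') = (\<Sum>i\<in>I - {i0, i1}. mu i * b i)"
        by (simp add: x_def)
      ultimately show ?thesis using 2 i01 by (simp add: muf_def)
    next
      case 3 then show ?thesis by (simp add: muf_def x_def)
    qed
  qed
  have cA: "cA x i u v = c (i,u,v)" if iuv: "i < m" "i \<noteq> i0" "u \<le> v" "v < n" for i u v
  proof (cases "i \<in> I \<and> u = a \<and> v = a")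
    case False then show ?thesis unfolding cA_def if_not_P[OF False] by (simp add: x_def)
  next
    case True
    then have iI: "i \<in> I" and uv: "u = a" "v = a" by auto
    have pt: "A i u' v' * X u' v' = cfree x i (min u' v') (max u' v') * Xf x u' v' + (if u' = a \<and> v' = a then c (i,a,a) * X a a else 0)"
      if "u' < n" "v' < n" for u' v'
      using that iI unfolding Xf[OF that] A_def sym_mats_of_def cfree_def
      by (auto simp: x_def min_def max_def split: if_splits)
    have "frob_inner n (A i) X = (\<Sum>u'<n. \<Sum>v'<n. cfree x i (min u' v') (max u' v') * Xf x u' v' + (if u' = a \<and> v' = a then c (i,a,a) * X a a else 0))"
      unfolding frob_inner_def using pt by (intro sum.cong refl) auto
    also have "\<dots> = frob_inner n (\<lambda>u' v'. cfree x i (min u' v') (max u' v')) (Xf x) + c (i,a,a) * X a a"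
    proof -
      have dd: "(\<Sum>u'<n. \<Sum>v'<n. if u' = a \<and> v' = a then K else 0) = K" for K :: real
      proof -
        have "(\<Sum>u'<n. \<Sum>v'<n. if u' = a \<and> v' = a then K else 0) = (\<Sum>u'<n. if u' = a then K else 0)"
        proof (intro sum.cong refl)
          fix u' show "(\<Sum>v'<n. if u' = a \<and> v' = a then K else 0) = (if u' = a then K else 0)"
            using a by (cases "u' = a") simp_all
        qed
        also have "\<dots> = K" using a by simp
        finally show ?thesis .
      qed
      show ?thesis unfolding frob_inner_def sum.distrib dd by simp
    qed
    finally have "frob_inner n (\<lambda>u' v'. cfree x i (min u' v') (max u' v')) (Xf x) = b i - c (i,a,a) * X a a"
      using fr iI unfolding A_def X_def by simp
    then show ?thesis using True qx Xf[OF a a] unfolding cA_def qf_def by simp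
  qed
  have Af: "Af x i u w = A i u w" if "i \<in> I" "i \<noteq> i0" "u < n" "w < n" for i u w
    unfolding Af_def A_def sym_mats_of_def using that I
    by (intro cA) (auto simp: min_def max_def)
  have W: "Wf x u j = (\<Sum>w<n. A i0 u w * Qm J G w j)" if uj: "u < n" "j \<in> J" for u j
  proof -
    have "0 = (\<Sum>i\<in>I. mu i * (\<Sum>w<n. A i u w * Qm J G w j))" using SQ uj unfolding A_def by simp
    also have "\<dots> = (\<Sum>w<n. A i0 u w * Qm J G w j) + (\<Sum>i\<in>I - {i0}. mu i * (\<Sum>w<n. A i u w * Qm J G w j))"
      using fI i0 mu0 by (simp add: sum.remove)
    finally have e: "(\<Sum>w<n. A i0 u w * Qm J G w j) = - (\<Sum>i\<in>I - {i0}. mu i * (\<Sum>w<n. A i u w * Qm J G w j))"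
      by simp
    have "Wf x u j = - (\<Sum>i\<in>I - {i0}. mu i * (\<Sum>w<n. A i u w * Qm J G w j))"
      unfolding Wf_def using uj by (intro arg_cong[where f=uminus] sum.cong refl) (auto simp: mu Af Q)
    then show ?thesis using e by simp
  qed
  have fJ: "finite J" by (rule fJ)
  have Wsplit: "(\<Sum>w<n. A i0 u w * Qm J G w j) = A i0 u j + (\<Sum>w\<in>{..<n} - J. A i0 u w * G w j)"
    if "j \<in> J" for u j
  proof -
    have "{..<n} = J \<union> ({..<n} - J)" using J by auto
    then have "(\<Sum>w<n. A i0 u w * Qm J G w j) = (\<Sum>w\<in>J. A i0 u w * Qm J G w j) + (\<Sum>w\<in>{..<n} - J. A i0 u w * Qm J G w j)"
      using fJ by (metis Diff_disjoint finite_Diff finite_lessThan sum.union_disjoint)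
    also have "(\<Sum>w\<in>J. A i0 u w * Qm J G w j) = (\<Sum>w\<in>J. if w = j then A i0 u w else 0)"
      by (intro sum.cong refl) (auto simp: Qm_def)
    also have "\<dots> = A i0 u j" using that fJ by simp
    also have "(\<Sum>w\<in>{..<n} - J. A i0 u w * Qm J G w j) = (\<Sum>w\<in>{..<n} - J. A i0 u w * G w j)"
      by (intro sum.cong refl) (auto simp: Qm_def)
    finally show ?thesis .
  qed
  have Asym: "A i u v = A i v u" for i u v
    unfolding A_def sym_mats_of_def by (simp add: min.commute max.commute)
  have B: "Bf x u j = A i0 u j" if "u < n" "u \<notin> J" "j \<in> J" for u j
  proof -
    have "(\<Sum>c'\<in>{..<n} - J. x (PA i0 (min u c') (max u c')) * x (PG c' j)) = (\<Sum>w\<in>{..<n} - J. A i0 u w * G w j)"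
      unfolding x_def A_def sym_mats_of_def by simp
    then show ?thesis unfolding Bf_def using W[of u j] Wsplit[of j u] that by simp
  qed
  have C: "Cf x j j' = A i0 j j'" if "j \<in> J" "j' \<in> J" for j j'
  proof -
    have "(\<Sum>c'\<in>{..<n} - J. Bf x c' j * x (PG c' j')) = (\<Sum>w\<in>{..<n} - J. A i0 j w * G w j')"
      by (intro sum.cong refl) (use that in \<open>auto simp: B x_def Asym\<close>)
    then show ?thesis unfolding Cf_def using W[of j j'] Wsplit[of j' j] that J by auto
  qed
  have "\<forall>t\<in>coord_index n m. c t = Fmap x t"
  proof
    fix t assume "t \<in> coord_index n m"
    then obtain i u v where t: "t = (i,u,v)" "i < m" "u \<le> v" "v < n" unfolding coord_index_def by auto
    have Ai0: "A i0 u v = c (i0, u, v)" using t unfolding A_def sym_mats_of_def by (simp add: min_def max_def)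
    show "c t = Fmap x t"
    proof (cases "i = i0")
      case False then show ?thesis using t by (simp add: Fmap_def cA)
    next
      case True
      show ?thesis
        using t True Ai0 J by (auto simp: Fmap_def x_def C B Asym)
    qed
  qed
  then show ?thesis using qx by blast
qed

end

context chvalid
begin

lemma bad_null:
  "\<exists>N\<in>null_sets (sym_lebesgue n m). \<forall>c\<in>space (sym_lebesgue n m).
     (\<exists>(p::nat) Y G mu. (\<forall>i\<in>I. frob_inner n (sym_mats_of c i) (gram p Y) = b i) \<and> mu i0 = 1 \<and>
        (\<forall>u<n. \<forall>j\<in>J. (\<Sum>i\<in>I. mu i * (\<Sum>w<n. sym_mats_of c i u w * Qm J G w j)) = 0) \<and>
        (\<forall>w<n. \<forall>l<p. Y w l = (\<Sum>j\<in>J. Qm J G w j * Y j l)) \<and>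
        gram p Y a a \<noteq> 0 \<and> (\<Sum>i\<in>I. mu i * b i) = 0 \<and> b i1 \<noteq> 0) \<longrightarrow> c \<in> N"
proof -
  obtain N where N: "N \<in> null_sets (PiM (coord_index n m) (\<lambda>_. lborel))"
    and NN: "\<forall>y\<in>space (PiM (coord_index n m) (\<lambda>_. lborel)).
           (\<exists>x. qf x \<noteq> 0 \<and> (\<forall>t\<in>coord_index n m. y t = Fmap x t)) \<longrightarrow> y \<in> N"
    using image_null[OF fK finite_coord_index card_K mp_qf, of Fmap] rq_Fmap by blast
  show ?thesis
  proof (intro bexI[of _ N] ballI impI)
    fix c assume c: "c \<in> space (sym_lebesgue n m)"
    assume "\<exists>(p::nat) Y G mu. (\<forall>i\<in>I. frob_inner n (sym_mats_of c i) (gram p Y) = b i) \<and> mu i0 = 1 \<and>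
        (\<forall>u<n. \<forall>j\<in>J. (\<Sum>i\<in>I. mu i * (\<Sum>w<n. sym_mats_of c i u w * Qm J G w j)) = 0) \<and>
        (\<forall>w<n. \<forall>l<p. Y w l = (\<Sum>j\<in>J. Qm J G w j * Y j l)) \<and>
        gram p Y a a \<noteq> 0 \<and> (\<Sum>i\<in>I. mu i * b i) = 0 \<and> b i1 \<noteq> 0"
    then obtain p :: nat and Y G mu where d: "\<forall>i\<in>I. frob_inner n (sym_mats_of c i) (gram p Y) = b i" "mu i0 = 1"
        "\<forall>u<n. \<forall>j\<in>J. (\<Sum>i\<in>I. mu i * (\<Sum>w<n. sym_mats_of c i u w * Qm J G w j)) = 0"
        "\<forall>w<n. \<forall>l<p. Y w l = (\<Sum>j\<in>J. Qm J G w j * Y j l)"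
        "gram p Y a a \<noteq> 0" "(\<Sum>i\<in>I. mu i * b i) = 0" "b i1 \<noteq> 0"
      by blast
    have "\<exists>x. qf x \<noteq> 0 \<and> (\<forall>t\<in>coord_index n m. c t = Fmap x t)"
      by (rule cover[OF d])
    then show "c \<in> N" using NN c unfolding sym_lebesgue_def by blast
  qed (use N in \<open>simp add: sym_lebesgue_def\<close>)
qed

end

lemma row_basis:
  fixes Y :: "nat \<Rightarrow> nat \<Rightarrow> real" and n p :: nat
  shows "\<exists>J G. J \<subseteq> {..<n} \<and> (\<forall>cf. (\<forall>l<p. (\<Sum>j\<in>J. cf j * Y j l) = 0) \<longrightarrow> (\<forall>j\<in>J. cf j = 0)) \<and>
     (\<forall>w<n. \<forall>l<p. Y w l = (\<Sum>j\<in>J. Qm J G w j * Y j l))"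
proof -
  define S where "S = {J. J \<subseteq> {..<n} \<and> (\<forall>cf. (\<forall>l<p. (\<Sum>j\<in>J. cf j * Y j l) = 0) \<longrightarrow> (\<forall>j\<in>J. cf j = 0))}"
  have fS: "finite S" unfolding S_def by (rule finite_subset[of _ "Pow {..<n}"]) auto
  have "{} \<in> S" unfolding S_def by simp
  then obtain J where JS: "J \<in> S" and Jmax: "\<forall>J'\<in>S. J \<subseteq> J' \<longrightarrow> J = J'"
    using finite_has_maximal[OF fS] by blast
  have Jn: "J \<subseteq> {..<n}" and Jind: "\<forall>cf. (\<forall>l<p. (\<Sum>j\<in>J. cf j * Y j l) = 0) \<longrightarrow> (\<forall>j\<in>J. cf j = 0)"
    using JS unfolding S_def by auto
  have fJ: "finite J" using Jn finite_subset by blast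
  have "\<forall>w\<in>{..<n} - J. \<exists>g. \<forall>l<p. Y w l = (\<Sum>j\<in>J. g j * Y j l)"
  proof
    fix w assume w: "w \<in> {..<n} - J"
    have "insert w J \<notin> S" using Jmax w by blast
    moreover have "insert w J \<subseteq> {..<n}" using Jn w by auto
    ultimately obtain cf where l0: "\<forall>l<p. (\<Sum>j\<in>insert w J. cf j * Y j l) = 0" and lnz: "\<exists>j\<in>insert w J. cf j \<noteq> 0"
      unfolding S_def by blast
    have l1: "cf w * Y w l + (\<Sum>j\<in>J. cf j * Y j l) = 0" if "l < p" for l
      using l0 that w fJ by simp
    have "cf w \<noteq> 0"
    proof
      assume "cf w = 0"
      then have "\<forall>l<p. (\<Sum>j\<in>J. cf j * Y j l) = 0" using l1 by simp
      then have "\<forall>j\<in>J. cf j = 0" using Jind by blast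
      then show False using lnz \<open>cf w = 0\<close> by auto
    qed
    then have "\<forall>l<p. Y w l = (\<Sum>j\<in>J. (- cf j / cf w) * Y j l)"
    proof (intro allI impI)
      fix l assume "l < p"
      then have e: "cf w * Y w l = - (\<Sum>j\<in>J. cf j * Y j l)" using l1 by (simp add: eq_neg_iff_add_eq_0)
      have "(\<Sum>j\<in>J. (- cf j / cf w) * Y j l) = - (\<Sum>j\<in>J. cf j * Y j l) / cf w"
        by (simp add: sum_divide_distrib sum_negf)
      also have "\<dots> = Y w l" using e \<open>cf w \<noteq> 0\<close> by (simp add: field_simps)
      finally show "Y w l = (\<Sum>j\<in>J. (- cf j / cf w) * Y j l)" by simp
    qed
    then show "\<exists>g. \<forall>l<p. Y w l = (\<Sum>j\<in>J. g j * Y j l)" by (rule exI[of _ "\<lambda>j. - cf j / cf w"])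
  qed
  from bchoice[OF this] obtain G where G: "\<forall>w\<in>{..<n} - J. \<forall>l<p. Y w l = (\<Sum>j\<in>J. G w j * Y j l)"
    by blast
  have "\<forall>w<n. \<forall>l<p. Y w l = (\<Sum>j\<in>J. Qm J G w j * Y j l)"
  proof (intro allI impI)
    fix w l assume w: "w < n" and l: "l < p"
    show "Y w l = (\<Sum>j\<in>J. Qm J G w j * Y j l)"
    proof (cases "w \<in> J")
      case True
      have "(\<Sum>j\<in>J. Qm J G w j * Y j l) = (\<Sum>j\<in>J. if w = j then Y j l else 0)"
        by (intro sum.cong refl) (use True in \<open>auto simp: Qm_def\<close>)
      also have "\<dots> = Y w l" using True fJ by simp
      finally show ?thesis by simp
    next
      case False
      then show ?thesis using G w l by (simp add: Qm_def)
    qed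
  qed
  then show ?thesis using Jn Jind by blast
qed

definition badc :: "nat \<Rightarrow> (nat \<Rightarrow> real) \<Rightarrow> nat set \<Rightarrow> nat set \<Rightarrow> nat \<Rightarrow> nat \<Rightarrow> nat \<Rightarrow> (nat \<times> nat \<times> nat \<Rightarrow> real) \<Rightarrow> bool" where
  "badc n b I J i0 i1 a c \<longleftrightarrow> (\<exists>(p::nat) Y G mu. (\<forall>i\<in>I. frob_inner n (sym_mats_of c i) (gram p Y) = b i) \<and> mu i0 = 1 \<and>
        (\<forall>u<n. \<forall>j\<in>J. (\<Sum>i\<in>I. mu i * (\<Sum>w<n. sym_mats_of c i u w * Qm J G w j)) = 0) \<and>
        (\<forall>w<n. \<forall>l<p. Y w l = (\<Sum>j\<in>J. Qm J G w j * Y j l)) \<and>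
        gram p Y a a \<noteq> 0 \<and> (\<Sum>i\<in>I. mu i * b i) = 0 \<and> b i1 \<noteq> 0)"

lemma bad_null':
  assumes "I \<subseteq> {..<m}" "i0 \<in> I" "i1 \<in> I" "i0 \<noteq> i1" "J \<subseteq> {..<n}" "a < n"
  shows "\<exists>N\<in>null_sets (sym_lebesgue n m). \<forall>c\<in>space (sym_lebesgue n m). badc n b I J i0 i1 a c \<longrightarrow> c \<in> N"
proof -
  interpret chvalid n m b I J i0 i1 a by unfold_locales (use assms in auto)
  show ?thesis unfolding badc_def by (rule bad_null)
qed

lemma sum_swap3: "(\<Sum>i\<in>A. \<Sum>j\<in>B. \<Sum>k\<in>C. f i j k) = (\<Sum>k\<in>C. \<Sum>i\<in>A. \<Sum>j\<in>B. f i j k)"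
proof -
  have "(\<Sum>i\<in>A. \<Sum>j\<in>B. \<Sum>k\<in>C. f i j k) = (\<Sum>i\<in>A. \<Sum>k\<in>C. \<Sum>j\<in>B. f i j k)"
    by (intro sum.cong refl sum.swap)
  also have "\<dots> = (\<Sum>k\<in>C. \<Sum>i\<in>A. \<Sum>j\<in>B. f i j k)" by (rule sum.swap)
  finally show ?thesis .
qed

theorem proposition6:
  fixes n p m1 m2 :: nat and b :: "nat \<Rightarrow> real"
  assumes "\<forall>i < m1 + m2. b i \<noteq> 0"
  shows "\<exists>N \<in> null_sets (sym_lebesgue n (m1 + m2)).
           \<forall>c \<in> space (sym_lebesgue n (m1 + m2)) - N.
             \<forall>Y :: nat \<Rightarrow> nat \<Rightarrow> real.
               BM_feasible n p m1 m2 (sym_mats_of c) b Y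
               \<longrightarrow> LICQ n p (m1 + m2) (sym_mats_of c) b Y"
proof -
  define m where "m = m1 + m2"
  have bnz: "\<And>i. i < m \<Longrightarrow> b i \<noteq> 0" using assms m_def by auto
  define Ch where "Ch = {(I, J, i0, i1, a) | I J i0 i1 a. I \<subseteq> {..<m} \<and> i0 \<in> I \<and> i1 \<in> I \<and> i0 \<noteq> i1 \<and> J \<subseteq> {..<n} \<and> a < n}"
  have fCh: "finite Ch"
  proof (rule finite_subset)
    show "Ch \<subseteq> Pow {..<m} \<times> Pow {..<n} \<times> {..<m} \<times> {..<m} \<times> {..<n}"
      unfolding Ch_def by auto
  qed auto
  have "\<forall>ch\<in>Ch. \<exists>N. N \<in> null_sets (sym_lebesgue n m) \<and> (\<forall>c\<in>space (sym_lebesgue n m).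
          badc n b (fst ch) (fst (snd ch)) (fst (snd (snd ch))) (fst (snd (snd (snd ch)))) (snd (snd (snd (snd ch)))) c \<longrightarrow> c \<in> N)"
  proof
    fix ch assume "ch \<in> Ch"
    then obtain I J i0 i1 a where ch: "ch = (I, J, i0, i1, a)" "I \<subseteq> {..<m}" "i0 \<in> I" "i1 \<in> I" "i0 \<noteq> i1" "J \<subseteq> {..<n}" "a < n"
      unfolding Ch_def by blast
    show "\<exists>N. N \<in> null_sets (sym_lebesgue n m) \<and> (\<forall>c\<in>space (sym_lebesgue n m).
          badc n b (fst ch) (fst (snd ch)) (fst (snd (snd ch))) (fst (snd (snd (snd ch)))) (snd (snd (snd (snd ch)))) c \<longrightarrow> c \<in> N)"
      unfolding ch(1) fst_conv snd_conv using bad_null'[OF ch(2-7)] by blast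
  qed
  from bchoice[OF this] obtain Nf where Nf: "\<forall>ch\<in>Ch. Nf ch \<in> null_sets (sym_lebesgue n m) \<and> (\<forall>c\<in>space (sym_lebesgue n m).
          badc n b (fst ch) (fst (snd ch)) (fst (snd (snd ch))) (fst (snd (snd (snd ch))))  (snd (snd (snd (snd ch)))) c \<longrightarrow> c \<in> Nf ch)"
    by blast
  define N where "N = (\<Union>ch\<in>Ch. Nf ch)"
  have N: "N \<in> null_sets (sym_lebesgue n m)"
    unfolding N_def using Nf fCh by (intro null_sets_UN') (auto intro: countable_finite)
  have main: "LICQ n p m (sym_mats_of c) b Y"
    if c: "c \<in> space (sym_lebesgue n m) - N" and feas: "BM_feasible n p m1 m2 (sym_mats_of c) b Y" for c Y
  proof (rule ccontr)
    assume "\<not> LICQ n p m (sym_mats_of c) b Y"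
    define A where "A = sym_mats_of c"
    define X where "X = gram p Y"
    define act where "act = active_set n p m A b Y"
    obtain mu' i0 where h: "\<forall>j<n. \<forall>l<p. (\<Sum>i\<in>act. mu' i * constr_grad n A i Y j l) = 0"
      and i0: "i0 \<in> act" "mu' i0 \<noteq> 0"
      using \<open>\<not> LICQ _ _ _ _ _ _\<close> unfolding LICQ_def A_def act_def by blast
    have actm: "act \<subseteq> {..<m}" unfolding act_def active_set_def by auto
    have fact: "finite act" using actm finite_subset by blast
    have actfr: "\<forall>i\<in>act. frob_inner n (A i) X = b i" unfolding act_def active_set_def X_def by auto
    define I where "I = {i\<in>act. mu' i \<noteq> 0}"
    define mu where "mu i = mu' i / mu' i0" for i
    have II: "I \<subseteq> act" unfolding I_def by auto
    have Im: "I \<subseteq> {..<m}" using II actm by auto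
    have fI: "finite I" using II fact finite_subset by blast
    have i0I: "i0 \<in> I" using i0 unfolding I_def by auto
    have fr: "\<forall>i\<in>I. frob_inner n (A i) X = b i" using actfr II by auto
    have mu0: "mu i0 = 1" using i0 by (simp add: mu_def)
    have F2: "(\<Sum>i\<in>I. mu i * (\<Sum>k<n. A i u k * Y k l)) = 0" if ul: "u < n" "l < p" for u l
    proof -
      have "(\<Sum>i\<in>act. mu' i * constr_grad n A i Y u l) = (\<Sum>i\<in>I. mu' i * constr_grad n A i Y u l)"
        by (rule sum.mono_neutral_right[OF fact II]) (auto simp: I_def)
      then have "(\<Sum>i\<in>I. mu' i * (2 * (\<Sum>k<n. A i u k * Y k l))) = 0"
        using h ul unfolding constr_grad_def by simp
      then have e1: "(1 / (2 * mu' i0)) * (\<Sum>i\<in>I. mu' i * (2 * (\<Sum>k<n. A i u k * Y k l))) = 0" by simp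
      have e2: "(1 / (2 * mu' i0)) * (\<Sum>i\<in>I. mu' i * (2 * (\<Sum>k<n. A i u k * Y k l)))
          = (\<Sum>i\<in>I. mu i * (\<Sum>k<n. A i u k * Y k l))"
        unfolding sum_distrib_left mu_def by (intro sum.cong refl) (simp add: field_simps)
      show ?thesis by (rule trans[OF e2[symmetric] e1])
    qed
    have mub: "(\<Sum>i\<in>I. mu i * b i) = 0"
    proof -
      have "(\<Sum>i\<in>I. mu i * b i) = (\<Sum>i\<in>I. mu i * frob_inner n (A i) X)"
        using fr by (intro sum.cong refl) auto
      also have "\<dots> = (\<Sum>i\<in>I. \<Sum>u<n. \<Sum>v<n. \<Sum>l<p. mu i * A i u v * (Y u l * Y v l))"
        unfolding frob_inner_def X_def gram_def by (simp add: sum_distrib_left mult_ac)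
      also have "\<dots> = (\<Sum>u<n. \<Sum>i\<in>I. \<Sum>v<n. \<Sum>l<p. mu i * A i u v * (Y u l * Y v l))"
        by (rule sum.swap)
      also have "\<dots> = (\<Sum>u<n. \<Sum>l<p. \<Sum>i\<in>I. \<Sum>v<n. mu i * A i u v * (Y u l * Y v l))"
        by (intro sum.cong refl sum_swap3)
      also have "\<dots> = (\<Sum>u<n. \<Sum>l<p. Y u l * (\<Sum>i\<in>I. mu i * (\<Sum>v<n. A i u v * Y v l)))"
        by (simp add: sum_distrib_left mult_ac)
      also have "\<dots> = 0" using F2 by simp
      finally show ?thesis .
    qed
    obtain i1 where i1: "i1 \<in> I" "i1 \<noteq> i0"
    proof (rule ccontr)
      assume "\<not> thesis"
      then have "I = {i0}" using i0I that by blast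
      then have "b i0 = 0" using mub mu0 by simp
      moreover have "i0 < m" using i0I Im by auto
      ultimately show False using bnz by simp
    qed
    obtain a where a: "a < n" "X a a \<noteq> 0"
    proof (rule ccontr)
      assume "\<not> thesis"
      then have "\<forall>a<n. X a a = 0" using that by blast
      then have Y0: "Y u l = 0" if "u < n" "l < p" for u l
      proof -
        have "(\<Sum>l<p. Y u l * Y u l) = 0" using \<open>\<forall>a<n. X a a = 0\<close> that unfolding X_def gram_def by simp
        then have "\<forall>l\<in>{..<p}. Y u l * Y u l = 0" by (subst sum_nonneg_eq_0_iff[symmetric]) auto
        then show ?thesis using that by simp
      qed
      have "frob_inner n (A i0) X = 0"
        unfolding frob_inner_def X_def gram_def by (simp add: Y0)
      moreover have "i0 < m" using i0I Im by auto
      ultimately show False using fr i0I bnz by simp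
    qed
    obtain J G where J: "J \<subseteq> {..<n}" and ind: "\<forall>cf. (\<forall>l<p. (\<Sum>j\<in>J. cf j * Y j l) = 0) \<longrightarrow> (\<forall>j\<in>J. cf j = 0)"
      and span: "\<forall>w<n. \<forall>l<p. Y w l = (\<Sum>j\<in>J. Qm J G w j * Y j l)"
      using row_basis[of n p Y] by blast
    have SQ: "\<forall>u<n. \<forall>j\<in>J. (\<Sum>i\<in>I. mu i * (\<Sum>w<n. A i u w * Qm J G w j)) = 0"
    proof (intro allI impI)
      fix u assume u: "u < n"
      define cf where "cf j = (\<Sum>i\<in>I. mu i * (\<Sum>w<n. A i u w * Qm J G w j))" for j
      have "\<forall>l<p. (\<Sum>j\<in>J. cf j * Y j l) = 0"
      proof (intro allI impI)
        fix l assume l: "l < p"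
        have "(\<Sum>j\<in>J. cf j * Y j l) = (\<Sum>j\<in>J. \<Sum>i\<in>I. \<Sum>w<n. mu i * A i u w * (Qm J G w j * Y j l))"
          unfolding cf_def by (simp add: sum_distrib_left sum_distrib_right mult_ac)
        also have "\<dots> = (\<Sum>i\<in>I. \<Sum>w<n. \<Sum>j\<in>J. mu i * A i u w * (Qm J G w j * Y j l))"
          by (rule sum_swap3[symmetric])
        also have "\<dots> = (\<Sum>i\<in>I. mu i * (\<Sum>w<n. A i u w * (\<Sum>j\<in>J. Qm J G w j * Y j l)))"
          by (simp add: sum_distrib_left mult_ac)
        also have "\<dots> = (\<Sum>i\<in>I. mu i * (\<Sum>w<n. A i u w * Y w l))"
          using span l by (intro sum.cong refl arg_cong2[where f="(*)"]) auto
        also have "\<dots> = 0" using F2 u l by simp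
        finally show "(\<Sum>j\<in>J. cf j * Y j l) = 0" .
      qed
      then have "\<forall>j\<in>J. cf j = 0" using ind by blast
      then show "\<forall>j\<in>J. (\<Sum>i\<in>I. mu i * (\<Sum>w<n. A i u w * Qm J G w j)) = 0"
        unfolding cf_def by blast
    qed
    have b1: "b i1 \<noteq> 0" using i1 Im bnz by auto
    have bad: "badc n b I J i0 i1 a c"
      unfolding badc_def
      using fr mu0 SQ span a(2) mub b1 unfolding A_def X_def by blast
    have chm: "(I, J, i0, i1, a) \<in> Ch"
      unfolding Ch_def using Im i0I i1 J a(1) by blast
    then have "c \<in> Nf (I, J, i0, i1, a)" using Nf bad c by auto
    then have "c \<in> N" unfolding N_def using chm by blast
    then show False using c by simp
  qed
  show ?thesis
    using N main unfolding m_def by blast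
qed


end
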